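(* Let $X$ be a real Hilbert space, $A,B\colon X\rightrightarrows X$ maximally monotone, $T:=\operatorname{Id}-J_A+J_BR_A$, $v:=P_{\overline{\operatorname{ran}}(\operatorname{Id}-T)}(0)$, $D:=\operatorname{dom}A-\operatorname{dom}B$, $R:=\operatorname{ran}A+\operatorname{ran}B$, $v_D:=P_{\overline D}(0)$, $v_R:=P_{\overline R}(0)$, and assume $\overline{\operatorname{ran}}(\operatorname{Id}-T)=\overline{D\cap R}=\overline D\cap\overline R$. Suppose $v_R=0$, that $f\in X$ satisfies $f=v+Tf$, and let $x\in X$. Then (i) for all $n\in\mathbb N$, $J_AT^nf=J_A(f-nv_D)=J_Af$; (ii) $(J_AT^nx)_{n\in\mathbb N}$ is bounded; (iii) $(J_BR_AT^nx)_{n\in\mathbb N}$ is bounded.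
   Context: $J_C:=(\operatorname{Id}+C)^{-1}$, $R_C:=2J_C-\operatorname{Id}$ for maximally monotone $C$; $P_S$ is the projection onto a nonempty closed convex set $S$. *)

theory Defs
  imports "HOL-Analysis.Analysis"
begin

text \<open>Set-valued operators X \<rightrightarrows> X are modelled as functions 'a \<Rightarrow> 'a set
  (A x is the set of images of x; the graph is {(x,u). u \<in> A x}).\<close>

definition monotone_op :: "('a::real_inner \<Rightarrow> 'a set) \<Rightarrow> bool" where
  "monotone_op A \<longleftrightarrow> (\<forall>x y u w. u \<in> A x \<longrightarrow> w \<in> A y \<longrightarrow> 0 \<le> inner (x - y) (u - w))"

definition maximally_monotone :: "('a::real_inner \<Rightarrow> 'a set) \<Rightarrow> bool" where
  "maximally_monotone A \<longleftrightarrow> monotone_op A \<and>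
     (\<forall>B. monotone_op B \<and> (\<forall>x. A x \<subseteq> B x) \<longrightarrow> B = A)"

definition dom_op :: "('a \<Rightarrow> 'b set) \<Rightarrow> 'a set" where
  "dom_op A = {x. A x \<noteq> {}}"

definition ran_op :: "('a \<Rightarrow> 'b set) \<Rightarrow> 'b set" where
  "ran_op A = {u. \<exists>x. u \<in> A x}"

text \<open>Resolvent J_A = (Id + A)^{-1}: J_A x is the (unique, for maximally monotone A)
  point p with x \<in> p + A p.\<close>
definition resolvent :: "('a::real_inner \<Rightarrow> 'a set) \<Rightarrow> 'a \<Rightarrow> 'a" where
  "resolvent A x = (THE p. x - p \<in> A p)"

definition reflected_resolvent :: "('a::real_inner \<Rightarrow> 'a set) \<Rightarrow> 'a \<Rightarrow> 'a" where
  "reflected_resolvent A x = 2 *\<^sub>R resolvent A x - x"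

definition proj :: "'a::real_inner set \<Rightarrow> 'a \<Rightarrow> 'a" where
  "proj S x = (THE p. p \<in> S \<and> (\<forall>y\<in>S. norm (x - p) \<le> norm (x - y)))"

definition DR_op :: "('a::real_inner \<Rightarrow> 'a set) \<Rightarrow> ('a \<Rightarrow> 'a set) \<Rightarrow> 'a \<Rightarrow> 'a" where
  "DR_op A B x = x - resolvent A x + resolvent B (reflected_resolvent A x)"

end

theory Submission
  imports Defs
begin

lemma small_root:
  fixes r a b d :: real
  assumes "0 \<le> r" "r^2 \<le> a * r + b" "0 < d" "a \<le> d/2" "b \<le> d^2/4" "0 \<le> a"
  shows "r < d"
proof (rule ccontr)
  assume "\<not> r < d" hence rd: "d \<le> r" by simp
  have "a \<le> r/2" using rd assms by linarith
  hence "a * r \<le> (r/2) * r" using assms(1) by (rule mult_right_mono)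
  hence "a * r \<le> r^2/2" by (simp add: power2_eq_square)
  moreover have "d^2 \<le> r^2" using rd assms(3) by (intro power_mono) auto
  hence "b \<le> r^2/4" using assms by linarith
  ultimately have "r^2 \<le> 3/4 * r^2" using assms by linarith
  moreover have "0 < r^2" using rd assms by simp
  ultimately show False by linarith
qed

lemma lim_nonneg_aux:
  fixes a b :: real
  assumes "\<And>t. 0 < t \<Longrightarrow> t \<le> 1 \<Longrightarrow> 0 \<le> a + t * b"
  shows "0 \<le> a"
proof (rule ccontr)
  assume "\<not> 0 \<le> a"
  define t where "t = min 1 (- a / (2 * (\<bar>b\<bar> + 1)))"
  have "0 < - a / (2 * (\<bar>b\<bar> + 1))" using \<open>\<not> 0 \<le> a\<close> by (intro divide_pos_pos) auto
  hence t0: "0 < t" "t \<le> 1" by (auto simp: t_def)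
  have "t * (\<bar>b\<bar> + 1) \<le> - a / 2"
  proof -
    have "t \<le> - a / (2 * (\<bar>b\<bar> + 1))" by (simp add: t_def)
    hence "t * (\<bar>b\<bar> + 1) \<le> - a / (2 * (\<bar>b\<bar> + 1)) * (\<bar>b\<bar> + 1)"
      by (intro mult_right_mono) auto
    also have "\<dots> = - a / 2" by (simp add: field_simps)
    finally show ?thesis .
  qed
  moreover have "t * b \<le> t * (\<bar>b\<bar> + 1)" using t0 by (intro mult_left_mono) auto
  ultimately have "a + t * b < 0" using \<open>\<not> 0 \<le> a\<close> by linarith
  with assms[OF t0] show False by linarith
qed

lemma cauchy_aux:
  fixes Z :: "nat \<Rightarrow> 'b::real_normed_vector"
  assumes db: "\<And>k j. (norm (Z k - Z j))^2 \<le> 4 * (1/(real k + 1) + 1/(real j + 1))"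
  shows "Cauchy Z"
proof (rule CauchyI)
  fix e :: real assume e: "0 < e"
  have e8: "0 < e^2/8" using e by simp
  from ex_inverse_of_nat_less[OF e8] obtain M :: nat where M: "0 < M" "inverse (real M) < e^2/8"
    by blast
  have small: "1/(real k + 1) < e^2/8" if "M \<le> k" for k
  proof -
    have "1/(real k + 1) \<le> 1/(real M)"
      using that M(1) by (intro divide_left_mono) auto
    then show ?thesis using M(2) by (simp add: inverse_eq_divide)
  qed
  show "\<exists>M. \<forall>m\<ge>M. \<forall>n\<ge>M. norm (Z m - Z n) < e"
  proof (intro exI allI impI)
    fix k j assume kj: "M \<le> k" "M \<le> j"
    have "1/(real k + 1) + 1/(real j + 1) < e^2/8 + e^2/8"
      using small[OF kj(1)] small[OF kj(2)] by (rule add_strict_mono)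
    hence "4 * (1/(real k + 1) + 1/(real j + 1)) < e^2" by simp
    hence "(norm (Z k - Z j))^2 < e^2" by (rule order_le_less_trans[OF db[of k j]])
    then show "norm (Z k - Z j) < e" using e by (metis power2_less_imp_less less_imp_le)
  qed
qed

lemma aux_lin:
  fixes m ck cj nk nj P q ik ij :: real
  assumes "m \<le> (ck+cj)/2 + P/2" "P = (nk+nj)/2 - q/4"
       "ck + nk/2 < m + ik" "cj + nj/2 < m + ij"
  shows "q \<le> 4 * (ik + ij)"
  using assms by argo

lemma sc_min:
  fixes P :: "'b::{real_inner,complete_space} \<Rightarrow> real \<Rightarrow> bool"
  assumes ne: "P z0 c0"
    and lb: "\<And>z c. P z c \<Longrightarrow> L \<le> c + (norm z)^2/2"
    and mid: "\<And>z c w d. P z c \<Longrightarrow> P w d \<Longrightarrow> P ((1/2) *\<^sub>R (z + w)) ((c+d)/2)"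
    and clo: "\<And>Z C z c. (\<forall>k. P (Z k) (C k)) \<Longrightarrow> Z \<longlonglongrightarrow> z \<Longrightarrow> C \<longlonglongrightarrow> c \<Longrightarrow> P z c"
  shows "\<exists>z c. P z c \<and> (\<forall>w d. P w d \<longrightarrow> c + (norm z)^2/2 \<le> d + (norm w)^2/2)"
proof -
  define V where "V = {c + (norm z)^2/2 | z c. P z c}"
  define m where "m = Inf V"
  have Vne: "V \<noteq> {}" using ne by (auto simp: V_def)
  have Vbdd: "bdd_below V" unfolding V_def bdd_below_def using lb by blast
  have mle: "m \<le> c + (norm z)^2/2" if "P z c" for z c
    unfolding m_def by (rule cInf_lower) (use that Vbdd in \<open>auto simp: V_def\<close>)
  have "\<forall>k::nat. \<exists>zc. P (fst zc) (snd zc) \<and> snd zc + (norm (fst zc))^2/2 < m + 1/(real k + 1)"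
  proof
    fix k :: nat
    have "Inf V < m + 1/(real k + 1)" unfolding m_def by simp
    from cInf_lessD[OF Vne this] obtain y where "y \<in> V" "y < m + 1/(real k + 1)" by blast
    then show "\<exists>zc. P (fst zc) (snd zc) \<and> snd zc + (norm (fst zc))^2/2 < m + 1/(real k + 1)"
      unfolding V_def by force
  qed
  then obtain ZC where ZC: "\<And>k. P (fst (ZC k)) (snd (ZC k))"
    "\<And>k. snd (ZC k) + (norm (fst (ZC k)))^2/2 < m + 1/(real k + 1)"
    by metis
  define Z where "Z k = fst (ZC k)" for k
  define C where "C k = snd (ZC k)" for k
  have PZ: "P (Z k) (C k)" for k using ZC(1) by (simp add: Z_def C_def)
  have up: "C k + (norm (Z k))^2/2 < m + 1/(real k + 1)" for k using ZC(2) by (simp add: Z_def C_def)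
  have lo: "m \<le> C k + (norm (Z k))^2/2" for k using mle[OF PZ] .
  have par: "(norm ((1/2) *\<^sub>R (z + w)))^2 = ((norm z)^2 + (norm w)^2)/2 - (norm (z - w))^2/4"
    for z w :: 'b
    by (simp add: power2_norm_eq_inner inner_add_left inner_add_right inner_diff_left
        inner_diff_right inner_commute algebra_simps) (simp add: field_simps)
  have dist_bound: "(norm (Z k - Z j))^2 \<le> 4 * (1/(real k + 1) + 1/(real j + 1))" for k j
  proof -
    have "m \<le> (C k + C j)/2 + (norm ((1/2) *\<^sub>R (Z k + Z j)))^2/2"
      using mle[OF mid[OF PZ PZ]] .
    then show ?thesis using par[of "Z k" "Z j"] up[of k] up[of j] by (rule aux_lin)
  qed
  have "Cauchy Z" by (rule cauchy_aux[OF dist_bound])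
  from Cauchy_convergent[OF this] obtain z where Zz: "Z \<longlonglongrightarrow> z" unfolding convergent_def by blast
  have inv: "(\<lambda>k. 1/(real k + 1)) \<longlonglongrightarrow> 0"
    using LIMSEQ_inverse_real_of_nat by (simp add: inverse_eq_divide add.commute)
  have val: "(\<lambda>k. C k + (norm (Z k))^2/2) \<longlonglongrightarrow> m"
  proof (rule tendsto_sandwich[where f="\<lambda>_. m" and h="\<lambda>k. m + 1/(real k + 1)"])
    show "\<forall>\<^sub>F n in sequentially. m \<le> C n + (norm (Z n))\<^sup>2 / 2" by (intro always_eventually allI lo)
    show "\<forall>\<^sub>F n in sequentially. C n + (norm (Z n))\<^sup>2 / 2 \<le> m + 1 / (real n + 1)"
      by (intro always_eventually allI less_imp_le up)
    show "(\<lambda>n. m + 1 / (real n + 1)) \<longlonglongrightarrow> m" using tendsto_add[OF tendsto_const inv] by simp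
  qed simp
  have nz: "(\<lambda>k. (norm (Z k))^2/2) \<longlonglongrightarrow> (norm z)^2/2"
    by (intro tendsto_intros Zz) auto
  have Cc: "C \<longlonglongrightarrow> m - (norm z)^2/2"
    using tendsto_diff[OF val nz] by simp
  have Pz: "P z (m - (norm z)^2/2)" by (rule clo[OF _ Zz Cc]) (simp add: PZ)
  show ?thesis
  proof (intro exI conjI allI impI)
    show "P z (m - (norm z)^2/2)" by (rule Pz)
    fix w d assume "P w d"
    then show "m - (norm z)^2/2 + (norm z)^2/2 \<le> d + (norm w)^2/2" using mle by simp
  qed
qed

lemma maxmono_iff:
  "maximally_monotone A \<longleftrightarrow> monotone_op A \<and>
     (\<forall>x u. (\<forall>y w. w \<in> A y \<longrightarrow> 0 \<le> inner (x - y) (u - w)) \<longrightarrow> u \<in> A x)"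
proof
  assume mm: "maximally_monotone A"
  hence mo: "monotone_op A" by (simp add: maximally_monotone_def)
  show "monotone_op A \<and>
     (\<forall>x u. (\<forall>y w. w \<in> A y \<longrightarrow> 0 \<le> inner (x - y) (u - w)) \<longrightarrow> u \<in> A x)"
  proof (intro conjI mo allI impI)
    fix x u assume rel: "\<forall>y w. w \<in> A y \<longrightarrow> 0 \<le> inner (x - y) (u - w)"
    define B where "B = A(x := insert u (A x))"
    have memB: "w \<in> B y \<longleftrightarrow> w \<in> A y \<or> (y = x \<and> w = u)" for y w
      by (auto simp: B_def)
    have sym: "inner (y1 - y2) (w1 - w2) = inner (y2 - y1) (w2 - w1)" for y1 y2 w1 w2 :: 'a
      by (metis inner_minus_left inner_minus_right minus_diff_eq)
    have "monotone_op B"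
      unfolding monotone_op_def
    proof (intro allI impI)
      fix y1 y2 w1 w2 assume h: "w1 \<in> B y1" "w2 \<in> B y2"
      show "0 \<le> inner (y1 - y2) (w1 - w2)"
      proof (cases "w1 \<in> A y1")
        case True
        show ?thesis
        proof (cases "w2 \<in> A y2")
          case True
          with \<open>w1 \<in> A y1\<close> mo show ?thesis unfolding monotone_op_def by blast
        next
          case False
          with h(2) memB have e: "y2 = x" "w2 = u" by blast+
          have "0 \<le> inner (x - y1) (u - w1)" using rel \<open>w1 \<in> A y1\<close> by blast
          then show ?thesis using e sym[of y1 y2 w1 w2] by simp
        qed
      next
        case False
        with h(1) memB have e: "y1 = x" "w1 = u" by blast+
        show ?thesis
        proof (cases "w2 \<in> A y2")
          case True
          then have "0 \<le> inner (x - y2) (u - w2)" using rel by blast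
          then show ?thesis using e by simp
        next
          case False
          with h(2) memB have "y2 = x" "w2 = u" by blast+
          then show ?thesis using e by simp
        qed
      qed
    qed
    moreover have "\<forall>y. A y \<subseteq> B y" by (auto simp: B_def)
    ultimately have "B = A" using mm by (auto simp: maximally_monotone_def)
    then have "B x = A x" by simp
    moreover have "u \<in> B x" using memB by blast
    ultimately show "u \<in> A x" by simp
  qed
next
  assume h: "monotone_op A \<and>
     (\<forall>x u. (\<forall>y w. w \<in> A y \<longrightarrow> 0 \<le> inner (x - y) (u - w)) \<longrightarrow> u \<in> A x)"
  show "maximally_monotone A"
    unfolding maximally_monotone_def
  proof (intro conjI allI impI)
    show "monotone_op A" using h by simp
    fix B assume hB: "monotone_op B \<and> (\<forall>x. A x \<subseteq> B x)"
    show "B = A"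
    proof (rule ext, rule set_eqI, rule iffI)
      fix x u assume "u \<in> B x"
      then have "\<forall>y w. w \<in> A y \<longrightarrow> 0 \<le> inner (x - y) (u - w)"
        using hB unfolding monotone_op_def by blast
      then show "u \<in> A x" using h by blast
    qed (use hB in auto)
  qed
qed

lemma mm_mono: "maximally_monotone A \<Longrightarrow> u \<in> A x \<Longrightarrow> w \<in> A y \<Longrightarrow> 0 \<le> inner (x - y) (u - w)"
  by (auto simp: maximally_monotone_def monotone_op_def)

lemma mm_max: "maximally_monotone A \<Longrightarrow> (\<And>y w. w \<in> A y \<Longrightarrow> 0 \<le> inner (x - y) (u - w)) \<Longrightarrow> u \<in> A x"
  by (auto simp: maxmono_iff)

lemma mm_nonempty: "maximally_monotone A \<Longrightarrow> \<exists>x u. u \<in> A x"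
proof (rule ccontr)
  assume mm: "maximally_monotone A" and "\<not> (\<exists>x u. u \<in> A x)"
  hence "(0::'a) \<in> A 0" using mm_max[OF mm, of 0 0] by auto
  with \<open>\<not> _\<close> show False by blast
qed

lemma minty0:
  fixes A :: "'a::{real_inner,complete_space} \<Rightarrow> 'a set"
  assumes mm: "maximally_monotone A"
  shows "\<exists>p. - p \<in> A p"
proof -
  define P where "P = (\<lambda>(z::'a \<times> 'a) (c::real). \<forall>a a'. a' \<in> A a \<longrightarrow>
          inner (fst z) a' + inner a (snd z) - inner a a' \<le> c)"
  have key: "inner (fst z) (snd z) \<le> c" if "P z c" for z c
  proof (rule ccontr)
    assume nk: "\<not> inner (fst z) (snd z) \<le> c"
    have "snd z \<in> A (fst z)"
    proof (rule mm_max[OF mm])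
      fix y w assume "w \<in> A y"
      with that have "inner (fst z) w + inner y (snd z) - inner y w \<le> c" by (auto simp: P_def)
      with nk show "0 \<le> inner (fst z - y) (snd z - w)"
        by (simp add: inner_diff_left inner_diff_right inner_commute)
    qed
    with that have "inner (fst z) (snd z) + inner (fst z) (snd z) - inner (fst z) (snd z) \<le> c"
      unfolding P_def by blast
    with nk show False by simp
  qed
  have graphP: "P (a, a') (inner a a')" if "a' \<in> A a" for a a'
    unfolding P_def
  proof (intro allI impI)
    fix b b' assume "b' \<in> A b"
    from mm_mono[OF mm that this] show "inner (fst (a, a')) b' + inner b (snd (a, a')) - inner b b' \<le> inner a a'"
      by (simp add: inner_diff_left inner_diff_right inner_commute)
  qed
  obtain a0 a0' where a0: "a0' \<in> A a0" using mm_nonempty[OF mm] by blast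
  have convP: "P ((1 - t) *\<^sub>R z + t *\<^sub>R w) ((1 - t) * c + t * d)"
    if "P z c" "P w d" "0 \<le> t" "t \<le> 1" for z w c d t
    unfolding P_def
  proof (intro allI impI)
    fix a a' assume aa: "a' \<in> A a"
    have 1: "inner (fst z) a' + inner a (snd z) - inner a a' \<le> c" using that(1) aa by (auto simp: P_def)
    have 2: "inner (fst w) a' + inner a (snd w) - inner a a' \<le> d" using that(2) aa by (auto simp: P_def)
    have "(1 - t) * (inner (fst z) a' + inner a (snd z) - inner a a') \<le> (1 - t) * c"
      using 1 that by (intro mult_left_mono) auto
    moreover have "t * (inner (fst w) a' + inner a (snd w) - inner a a') \<le> t * d"
      using 2 that by (intro mult_left_mono) auto
    ultimately show "inner (fst ((1 - t) *\<^sub>R z + t *\<^sub>R w)) a' + inner a (snd ((1 - t) *\<^sub>R z + t *\<^sub>R w)) - inner a a'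
          \<le> (1 - t) * c + t * d"
      by (simp add: inner_add_left inner_add_right algebra_simps)
  qed
  have ex: "\<exists>z c. P z c \<and> (\<forall>w d. P w d \<longrightarrow> c + (norm z)^2/2 \<le> d + (norm w)^2/2)"
  proof (rule sc_min[where L=0])
    show "P (a0, a0') (inner a0 a0')" by (rule graphP[OF a0])
    fix z c assume "P z c"
    from key[OF this] have "inner (fst z) (snd z) \<le> c" .
    moreover have "(norm z)^2 = (norm (fst z))^2 + (norm (snd z))^2"
      by (simp add: power2_norm_eq_inner inner_prod_def)
    moreover have "0 \<le> (norm (fst z + snd z))^2" by simp
    moreover have "(norm (fst z + snd z))^2 = (norm (fst z))^2 + (norm (snd z))^2 + 2 * inner (fst z) (snd z)"
      by (simp add: power2_norm_eq_inner inner_add_left inner_add_right inner_commute)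
    ultimately show "0 \<le> c + (norm z)^2/2" by linarith
  next
    fix z c w d assume "P z c" "P w d"
    from convP[OF this, of "1/2"] show "P ((1/2) *\<^sub>R (z + w)) ((c+d)/2)"
      by (simp add: scaleR_add_right add_divide_distrib)
  next
    fix Z C z c assume h: "\<forall>k. P (Z k) (C k)" "Z \<longlonglongrightarrow> z" "C \<longlonglongrightarrow> c"
    show "P z c" unfolding P_def
    proof (intro allI impI)
      fix a a' assume aa: "a' \<in> A a"
      have lim: "(\<lambda>k. inner (fst (Z k)) a' + inner a (snd (Z k)) - inner a a') \<longlonglongrightarrow>
                 inner (fst z) a' + inner a (snd z) - inner a a'"
        by (intro tendsto_intros h(2))
      show "inner (fst z) a' + inner a (snd z) - inner a a' \<le> c"
        by (rule LIMSEQ_le[OF lim h(3)]) (use h(1) aa in \<open>auto simp: P_def\<close>)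
    qed
  qed
  then obtain z c where Pz: "P z c" and minz: "\<And>w d. P w d \<Longrightarrow> c + (norm z)^2/2 \<le> d + (norm w)^2/2"
    by blast
  have subg: "0 \<le> d - c + inner z (w - z)" if "P w d" for w d
  proof (rule lim_nonneg_aux[where b="(norm (w - z))^2/2"])
    fix t :: real assume t: "0 < t" "t \<le> 1"
    have "c + (norm z)^2/2 \<le> ((1 - t) * c + t * d) + (norm ((1 - t) *\<^sub>R z + t *\<^sub>R w))^2/2"
      using minz[OF convP[OF Pz that, of t]] t by simp
    moreover have "(1 - t) *\<^sub>R z + t *\<^sub>R w = z + t *\<^sub>R (w - z)" by (simp add: algebra_simps)
    moreover have "(norm (z + t *\<^sub>R (w - z)))^2 = (norm z)^2 + 2 * t * inner z (w - z) + t * t * (norm (w - z))^2"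
      by (simp add: power2_norm_eq_inner inner_add_left inner_add_right inner_commute algebra_simps)
    ultimately have "0 \<le> t * ((d - c + inner z (w - z)) + t * ((norm (w - z))^2/2))"
      by (simp add: algebra_simps power2_eq_square)
    then show "0 \<le> (d - c + inner z (w - z)) + t * ((norm (w - z))^2/2)"
      using t by (simp add: zero_le_mult_iff)
  qed
  obtain x u where z: "z = (x, u)" by (cases z)
  have Pneg: "P (- u, - x) (- c - (norm x)^2 - (norm u)^2)"
    unfolding P_def
  proof (intro allI impI)
    fix a a' assume aa: "a' \<in> A a"
    from subg[OF graphP[OF aa]] z
    show "inner (fst (- u, - x)) a' + inner a (snd (- u, - x)) - inner a a' \<le> - c - (norm x)^2 - (norm u)^2"
      by (simp add: inner_diff_left inner_diff_right inner_commute power2_norm_eq_inner)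
  qed
  from key[OF Pneg] have k1: "inner u x \<le> - c - (norm x)^2 - (norm u)^2" by simp
  from key[OF Pz] z have k2: "inner x u \<le> c" by simp
  have "(norm (x + u))^2 = (norm x)^2 + (norm u)^2 + 2 * inner x u"
    by (simp add: power2_norm_eq_inner inner_add_left inner_add_right inner_commute)
  with k1 k2 have "(norm (x + u))^2 \<le> 0" by (simp add: inner_commute)
  hence xu: "u = - x" by (simp add: add_eq_0_iff2 del: norm_le_zero_iff)
  have "u \<in> A x"
  proof (rule mm_max[OF mm])
    fix y w assume "w \<in> A y"
    with Pz z have "inner x w + inner y u - inner y w \<le> c" by (auto simp: P_def)
    moreover have "c \<le> inner x u" using k1 xu by (simp add: power2_norm_eq_inner)
    ultimately show "0 \<le> inner (x - y) (u - w)"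
      by (simp add: inner_diff_left inner_diff_right inner_commute)
  qed
  with xu show ?thesis by auto
qed

lemma minty:
  fixes A :: "'a::{real_inner,complete_space} \<Rightarrow> 'a set"
  assumes mm: "maximally_monotone A"
  shows "\<exists>p. x - p \<in> A p"
proof -
  define A' where "A' y = (\<lambda>w. w - x) ` A y" for y
  have "maximally_monotone A'"
    unfolding maxmono_iff
  proof (intro conjI allI impI)
    show "monotone_op A'" unfolding monotone_op_def A'_def
      using mm_mono[OF mm] by auto
    fix y u assume rel: "\<forall>y' w. w \<in> A' y' \<longrightarrow> 0 \<le> inner (y - y') (u - w)"
    have "u + x \<in> A y"
    proof (rule mm_max[OF mm])
      fix y' w assume "w \<in> A y'"
      hence "w - x \<in> A' y'" by (simp add: A'_def)
      with rel have "0 \<le> inner (y - y') (u - (w - x))" by blast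
      then show "0 \<le> inner (y - y') (u + x - w)" by (simp add: algebra_simps)
    qed
    then show "u \<in> A' y" unfolding A'_def by (rule rev_image_eqI) simp
  qed
  from minty0[OF this] obtain p where "- p \<in> A' p" by blast
  then obtain w where "w \<in> A p" "- p = w - x" by (auto simp: A'_def)
  then have "x - p \<in> A p" by (metis add_diff_cancel diff_add_cancel diff_minus_eq_add minus_diff_eq uminus_add_conv_diff)
  then show ?thesis by blast
qed

lemma res_unique:
  assumes mm: "maximally_monotone A" and "x - p \<in> A p" and "x - q \<in> A q"
  shows "p = q"
proof -
  from mm_mono[OF mm assms(2,3)] have "0 \<le> inner (p - q) ((x - p) - (x - q))" .
  also have "(x - p) - (x - q) = - (p - q)" by simp
  finally have "0 \<le> inner (p - q) (- (p - q))" .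
  then have "inner (p - q) (p - q) \<le> 0" by (simp only: inner_minus_right)
  then have "inner (p - q) (p - q) = 0" by (meson antisym inner_ge_zero)
  then show ?thesis by simp
qed

lemma res_prop:
  fixes A :: "'a::{real_inner,complete_space} \<Rightarrow> 'a set"
  assumes mm: "maximally_monotone A"
  shows "x - resolvent A x \<in> A (resolvent A x)"
proof -
  have "\<exists>!p. x - p \<in> A p" using minty[OF mm] res_unique[OF mm] by blast
  then show ?thesis unfolding resolvent_def by (rule theI')
qed

lemma res_eq:
  fixes A :: "'a::{real_inner,complete_space} \<Rightarrow> 'a set"
  assumes mm: "maximally_monotone A" and "x - p \<in> A p"
  shows "resolvent A x = p"
  using res_unique[OF mm res_prop[OF mm] assms(2)] .

lemma minty_scaled:
  fixes A :: "'a::{real_inner,complete_space} \<Rightarrow> 'a set"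
  assumes mm: "maximally_monotone A" and l: "0 < l"
  shows "\<exists>p. (1/l) *\<^sub>R (x - p) \<in> A p"
proof -
  define A' where "A' y = (\<lambda>w. l *\<^sub>R w) ` A y" for y
  have "maximally_monotone A'"
    unfolding maxmono_iff
  proof (intro conjI allI impI)
    show "monotone_op A'" unfolding monotone_op_def A'_def
    proof (intro allI impI)
      fix y1 y2 u w assume "u \<in> (*\<^sub>R) l ` A y1" "w \<in> (*\<^sub>R) l ` A y2"
      then obtain u' w' where uw: "u' \<in> A y1" "w' \<in> A y2" "u = l *\<^sub>R u'" "w = l *\<^sub>R w'" by blast
      have "0 \<le> l * inner (y1 - y2) (u' - w')" using mm_mono[OF mm uw(1,2)] l by simp
      then show "0 \<le> inner (y1 - y2) (u - w)" using uw by (simp add: scaleR_diff_right[symmetric])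
    qed
    fix y u assume rel: "\<forall>y' w. w \<in> A' y' \<longrightarrow> 0 \<le> inner (y - y') (u - w)"
    have "(1/l) *\<^sub>R u \<in> A y"
    proof (rule mm_max[OF mm])
      fix y' w assume "w \<in> A y'"
      hence "l *\<^sub>R w \<in> A' y'" unfolding A'_def by (rule imageI)
      with rel have "0 \<le> inner (y - y') (u - l *\<^sub>R w)" by blast
      hence "0 \<le> (1/l) * inner (y - y') (u - l *\<^sub>R w)" using l by simp
      also have "(1/l) * inner (y - y') (u - l *\<^sub>R w) = inner (y - y') ((1/l) *\<^sub>R u - w)"
        using l by (simp add: inner_diff_right algebra_simps)
      finally show "0 \<le> inner (y - y') ((1/l) *\<^sub>R u - w)" .
    qed
    then show "u \<in> A' y" unfolding A'_def by (rule rev_image_eqI) (use l in simp)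
  qed
  from minty[OF this] obtain p where "x - p \<in> A' p" by blast
  then obtain w where "w \<in> A p" "x - p = l *\<^sub>R w" by (auto simp: A'_def)
  then have "(1/l) *\<^sub>R (x - p) \<in> A p" using l by simp
  then show ?thesis by blast
qed

definition inv_op :: "('a \<Rightarrow> 'a set) \<Rightarrow> 'a \<Rightarrow> 'a set" where
  "inv_op A y = {x. y \<in> A x}"

lemma inv_mm:
  assumes mm: "maximally_monotone A"
  shows "maximally_monotone (inv_op A)"
  unfolding maxmono_iff
proof (intro conjI allI impI)
  show "monotone_op (inv_op A)" unfolding monotone_op_def inv_op_def
    using mm_mono[OF mm] by (simp add: inner_commute)
  fix x u assume rel: "\<forall>y w. w \<in> inv_op A y \<longrightarrow> 0 \<le> inner (x - y) (u - w)"
  have "x \<in> A u"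
  proof (rule mm_max[OF mm])
    fix y w assume "w \<in> A y"
    hence "y \<in> inv_op A w" by (simp add: inv_op_def)
    with rel have "0 \<le> inner (x - w) (u - y)" by blast
    then show "0 \<le> inner (u - y) (x - w)" by (simp add: inner_commute)
  qed
  then show "u \<in> inv_op A x" by (simp add: inv_op_def)
qed

lemma dom_inv: "dom_op (inv_op A) = ran_op A"
  by (auto simp: dom_op_def ran_op_def inv_op_def)

lemma approx_closure:
  fixes x :: "'a::real_normed_vector"
  assumes K: "0 \<le> K" and M: "0 \<le> M"
    and h: "\<And>l. 0 < l \<Longrightarrow> \<exists>y\<in>S. (norm (y - x))^2 \<le> (l * K) * norm (y - x) + l * M"
  shows "x \<in> closure S"
  unfolding closure_approachable
proof (intro allI impI)
  fix e :: real assume e: "0 < e"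
  define l where "l = min (e / (2 * (K + 1))) (e^2 / (4 * (M + 1)))"
  have l0: "0 < l" using e K M by (simp add: l_def)
  have l1: "l * (K + 1) \<le> e / 2"
  proof -
    have "l \<le> e / (2 * (K + 1))" by (simp add: l_def)
    hence "l * (K + 1) \<le> e / (2 * (K + 1)) * (K + 1)" using K by (intro mult_right_mono) auto
    also have "\<dots> = e / 2" using K by (simp add: field_simps)
    finally show ?thesis .
  qed
  have l2: "l * (M + 1) \<le> e^2 / 4"
  proof -
    have "l \<le> e^2 / (4 * (M + 1))" by (simp add: l_def)
    hence "l * (M + 1) \<le> e^2 / (4 * (M + 1)) * (M + 1)" using M by (intro mult_right_mono) auto
    also have "\<dots> = e^2 / 4" using M by (simp add: field_simps)
    finally show ?thesis .
  qed
  from h[OF l0] obtain y where y: "y \<in> S" "(norm (y - x))^2 \<le> (l * K) * norm (y - x) + l * M" by blast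
  have "norm (y - x) < e"
  proof (rule small_root[OF _ y(2) e])
    show "l * K \<le> e / 2" using l1 l0 by (simp add: algebra_simps)
    show "l * M \<le> e^2 / 4" using l2 l0 by (simp add: algebra_simps)
    show "0 \<le> l * K" using l0 K by simp
  qed simp
  then show "\<exists>y\<in>S. dist y x < e" using y(1) by (auto simp: dist_norm)
qed

lemma convex_closure_pairs:
  fixes S :: "'a::real_normed_vector set"
  assumes h: "\<And>p q t. p \<in> S \<Longrightarrow> q \<in> S \<Longrightarrow> 0 \<le> t \<Longrightarrow> t \<le> 1 \<Longrightarrow> (1 - t) *\<^sub>R p + t *\<^sub>R q \<in> closure S"
  shows "convex (closure S)"
proof (rule convexI)
  fix p q and u v :: real assume pq: "p \<in> closure S" "q \<in> closure S" and uv: "0 \<le> u" "0 \<le> v" "u + v = 1"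
  from pq obtain P Q where P: "\<forall>n. P n \<in> S" "P \<longlonglongrightarrow> p" and Q: "\<forall>n. Q n \<in> S" "Q \<longlonglongrightarrow> q"
    unfolding closure_sequential by blast
  have u: "u = 1 - v" using uv by simp
  have A: "\<And>n. (1 - v) *\<^sub>R P n + v *\<^sub>R Q n \<in> closure S"
    using P Q uv h by (simp add: u)
  have B: "(\<lambda>n. (1 - v) *\<^sub>R P n + v *\<^sub>R Q n) \<longlonglongrightarrow> (1 - v) *\<^sub>R p + v *\<^sub>R q"
    by (intro tendsto_intros P(2) Q(2))
  have "(1 - v) *\<^sub>R p + v *\<^sub>R q \<in> closure S"
    by (rule closed_sequentially[OF closed_closure A B])
  then show "u *\<^sub>R p + v *\<^sub>R q \<in> closure S" by (simp add: u)
qed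

lemma dom_arith:
  fixes r \<alpha> \<beta> t l a1 a2 k1 k2 ip iq :: real
  assumes h1: "l * \<alpha> \<le> ip" and h2: "l * \<beta> \<le> iq" and c: "(1 - t) * ip + t * iq = - (r^2)"
    and t: "0 \<le> t" "t \<le> 1" and l: "0 < l"
    and a: "- \<alpha> \<le> (r + a1) * k1" and b: "- \<beta> \<le> (r + a2) * k2"
    and nn: "0 \<le> r" "0 \<le> a1" "0 \<le> a2" "0 \<le> k1" "0 \<le> k2"
  shows "r^2 \<le> (l * (k1 + k2)) * r + l * (a1 * k1 + a2 * k2)"
proof -
  have "(1 - t) * (l * \<alpha>) \<le> (1 - t) * ip" using h1 t by (intro mult_left_mono) auto
  moreover have "t * (l * \<beta>) \<le> t * iq" using h2 t by (intro mult_left_mono) auto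
  ultimately have e1: "r^2 \<le> l * ((1 - t) * (- \<alpha>) + t * (- \<beta>))" using c by (simp add: algebra_simps)
  have q1: "0 \<le> (r + a1) * k1" "0 \<le> (r + a2) * k2" using nn by simp_all
  have "(1 - t) * (- \<alpha>) \<le> (1 - t) * ((r + a1) * k1)" using a t by (intro mult_left_mono) auto
  also have "\<dots> \<le> (r + a1) * k1" using q1(1) t by (intro mult_left_le_one_le) auto
  finally have f1: "(1 - t) * (- \<alpha>) \<le> (r + a1) * k1" .
  have "t * (- \<beta>) \<le> t * ((r + a2) * k2)" using b t by (intro mult_left_mono) auto
  also have "\<dots> \<le> (r + a2) * k2" using q1(2) t by (intro mult_left_le_one_le) auto
  finally have f2: "t * (- \<beta>) \<le> (r + a2) * k2" .
  have "(1 - t) * (- \<alpha>) + t * (- \<beta>) \<le> (k1 + k2) * r + (a1 * k1 + a2 * k2)"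
    using f1 f2 by (simp add: algebra_simps)
  hence "l * ((1 - t) * (- \<alpha>) + t * (- \<beta>)) \<le> l * ((k1 + k2) * r + (a1 * k1 + a2 * k2))"
    using l by (intro mult_left_mono) auto
  with e1 show ?thesis by (simp add: algebra_simps)
qed

lemma dom_closure_convex:
  fixes A :: "'a::{real_inner,complete_space} \<Rightarrow> 'a set"
  assumes mm: "maximally_monotone A"
  shows "convex (closure (dom_op A))"
proof (rule convex_closure_pairs)
  fix p q and t :: real assume pq: "p \<in> dom_op A" "q \<in> dom_op A" and t: "0 \<le> t" "t \<le> 1"
  from pq obtain p' q' where p': "p' \<in> A p" and q': "q' \<in> A q" by (auto simp: dom_op_def)
  define x where "x = (1 - t) *\<^sub>R p + t *\<^sub>R q"
  define K where "K = norm p' + norm q'"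
  define M where "M = norm (x - p) * norm p' + norm (x - q) * norm q'"
  show "(1 - t) *\<^sub>R p + t *\<^sub>R q \<in> closure (dom_op A)"
    unfolding x_def[symmetric]
  proof (rule approx_closure[where K=K and M=M])
    show "0 \<le> K" "0 \<le> M" by (simp_all add: K_def M_def)
    fix l :: real assume l: "0 < l"
    from minty_scaled[OF mm l, of x] obtain y where y: "(1/l) *\<^sub>R (x - y) \<in> A y" by blast
    have ydom: "y \<in> dom_op A" using y by (auto simp: dom_op_def)
    define r where "r = norm (y - x)"
    define \<alpha> where "\<alpha> = inner (y - p) p'"
    define \<beta> where "\<beta> = inner (y - q) q'"
    have mono_gen: "0 \<le> inner (y - a) (x - y) - l * inner (y - a) a'" if "a' \<in> A a" for a a'
    proof -
      from mm_mono[OF mm y that] have "0 \<le> inner (y - a) ((1/l) *\<^sub>R (x - y) - a')" .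
      hence "0 \<le> l * inner (y - a) ((1/l) *\<^sub>R (x - y) - a')" using l by simp
      also have "\<dots> = inner (y - a) (x - y) - l * inner (y - a) a'"
        using l by (simp add: inner_diff_right algebra_simps)
      finally show ?thesis .
    qed
    have mp: "l * \<alpha> \<le> inner (y - p) (x - y)" using mono_gen[OF p'] by (simp add: \<alpha>_def)
    have mq: "l * \<beta> \<le> inner (y - q) (x - y)" using mono_gen[OF q'] by (simp add: \<beta>_def)
    have comb: "(1 - t) * inner (y - p) (x - y) + t * inner (y - q) (x - y) = - (r^2)"
    proof -
      have "(1 - t) *\<^sub>R (y - p) + t *\<^sub>R (y - q) = y - x" by (simp add: x_def algebra_simps)
      moreover have "inner ((1 - t) *\<^sub>R (y - p) + t *\<^sub>R (y - q)) (x - y) = (1 - t) * inner (y - p) (x - y) + t * inner (y - q) (x - y)"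
        by (simp add: inner_add_left)
      ultimately have "(1 - t) * inner (y - p) (x - y) + t * inner (y - q) (x - y) = inner (y - x) (x - y)"
        by simp
      also have "\<dots> = - inner (y - x) (y - x)"
        by (simp add: inner_diff_left inner_diff_right inner_commute)
      also have "inner (y - x) (y - x) = r^2" unfolding r_def by (simp add: power2_norm_eq_inner)
      finally show ?thesis .
    qed
    have a1: "- \<alpha> \<le> (r + norm (x - p)) * norm p'"
    proof -
      have c1: "- \<alpha> \<le> norm (y - p) * norm p'" unfolding \<alpha>_def
        using Cauchy_Schwarz_ineq2[of "y - p" p'] by linarith
      have c2: "norm (y - p) \<le> r + norm (x - p)" unfolding r_def
        using norm_triangle_ineq[of "y - x" "x - p"] by simp
      from mult_right_mono[OF c2 norm_ge_zero[of p']] c1 show ?thesis by linarith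
    qed
    have b1: "- \<beta> \<le> (r + norm (x - q)) * norm q'"
    proof -
      have c1: "- \<beta> \<le> norm (y - q) * norm q'" unfolding \<beta>_def
        using Cauchy_Schwarz_ineq2[of "y - q" q'] by linarith
      have c2: "norm (y - q) \<le> r + norm (x - q)" unfolding r_def
        using norm_triangle_ineq[of "y - x" "x - q"] by simp
      from mult_right_mono[OF c2 norm_ge_zero[of q']] c1 show ?thesis by linarith
    qed
    have "0 \<le> r" by (simp add: r_def)
    have "r^2 \<le> (l * (norm p' + norm q')) * r + l * (norm (x - p) * norm p' + norm (x - q) * norm q')"
      by (rule dom_arith[OF mp mq comb t l a1 b1 \<open>0 \<le> r\<close>]) simp_all
    hence "r^2 \<le> (l * K) * r + l * M" by (simp add: K_def M_def)
    then show "\<exists>y\<in>dom_op A. (norm (y - x))^2 \<le> (l * K) * norm (y - x) + l * M"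
      using ydom by (auto simp: r_def)
  qed
qed

lemma ran_closure_convex:
  fixes A :: "'a::{real_inner,complete_space} \<Rightarrow> 'a set"
  assumes mm: "maximally_monotone A"
  shows "convex (closure (ran_op A))"
  using dom_closure_convex[OF inv_mm[OF mm]] by (simp add: dom_inv)

lemma barrier:
  fixes B :: "'a::{real_inner,complete_space} \<Rightarrow> 'a set"
  assumes mm: "maximally_monotone B" and bb: "b' \<in> B b"
    and sig: "\<And>c. c \<in> dom_op B \<Longrightarrow> inner u c \<le> \<sigma>"
  shows "b' + u \<in> closure (ran_op B)"
proof (rule approx_closure[where K="norm b" and M="\<bar>\<sigma>\<bar> + norm b * norm u"])
  show "0 \<le> norm b" "0 \<le> \<bar>\<sigma>\<bar> + norm b * norm u" by simp_all
  fix l :: real assume l: "0 < l"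
  define y where "y = b' + u"
  have l': "0 < 1/l" using l by simp
  from minty_scaled[OF mm l', of "(1/l) *\<^sub>R y"] obtain p where
    p0: "(1 / (1/l)) *\<^sub>R ((1/l) *\<^sub>R y - p) \<in> B p" by blast
  have "(1 / (1/l)) *\<^sub>R ((1/l) *\<^sub>R y - p) = y - l *\<^sub>R p" using l by (simp add: algebra_simps)
  with p0 have p: "y - l *\<^sub>R p \<in> B p" by simp
  have pran: "y - l *\<^sub>R p \<in> ran_op B" using p by (auto simp: ran_op_def)
  have pdom: "p \<in> dom_op B" using p by (auto simp: dom_op_def)
  from mm_mono[OF mm p bb] have "0 \<le> inner (p - b) ((y - l *\<^sub>R p) - b')" .
  also have "(y - l *\<^sub>R p) - b' = u - l *\<^sub>R p" by (simp add: y_def)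
  finally have "0 \<le> inner p u - inner b u - l * inner p p + l * inner b p"
    by (simp add: inner_diff_left inner_diff_right inner_commute algebra_simps)
  moreover have "inner p u \<le> \<sigma>" using sig[OF pdom] by (simp add: inner_commute)
  moreover have "- inner b u \<le> norm b * norm u" using Cauchy_Schwarz_ineq2[of b u] by linarith
  moreover have "inner b p \<le> norm b * norm p" using Cauchy_Schwarz_ineq2[of b p] by linarith
  moreover have "l * inner b p \<le> l * (norm b * norm p)" using calculation(4) l by (intro mult_left_mono) auto
  ultimately have "l * (norm p)^2 \<le> (\<bar>\<sigma>\<bar> + norm b * norm u) + l * (norm b * norm p)"
    by (simp add: power2_norm_eq_inner)
  hence "l * (l * (norm p)^2) \<le> l * ((\<bar>\<sigma>\<bar> + norm b * norm u) + l * (norm b * norm p))"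
    using l by (intro mult_left_mono) auto
  hence main: "(l * norm p)^2 \<le> (l * norm b) * (l * norm p) + l * (\<bar>\<sigma>\<bar> + norm b * norm u)"
    by (simp add: power2_eq_square algebra_simps)
  have ns: "norm ((y - l *\<^sub>R p) - y) = l * norm p" using l by simp
  have "(norm ((y - l *\<^sub>R p) - y))^2 \<le> (l * norm b) * norm ((y - l *\<^sub>R p) - y) + l * (\<bar>\<sigma>\<bar> + norm b * norm u)"
    unfolding ns by (rule main)
  then show "\<exists>z\<in>ran_op B. (norm (z - (b' + u)))^2 \<le> (l * norm b) * norm (z - (b' + u)) + l * (\<bar>\<sigma>\<bar> + norm b * norm u)"
    using pran unfolding y_def by blast
qed

lemma proj0_var:
  fixes S :: "'a::real_inner set"
  assumes cv: "convex S" and p: "p \<in> S" and mn: "\<forall>y\<in>S. norm p \<le> norm y" and y: "y \<in> S"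
  shows "0 \<le> inner p (y - p)"
proof -
  have H: "0 \<le> 2 * inner p (y - p) + t * (norm (y - p))^2" if t: "0 < t" "t \<le> 1" for t
  proof -
    have "(1 - t) *\<^sub>R p + t *\<^sub>R y \<in> S" by (rule convexD[OF cv p y]) (use t in auto)
    moreover have "(1 - t) *\<^sub>R p + t *\<^sub>R y = p + t *\<^sub>R (y - p)" by (simp add: algebra_simps)
    ultimately have "p + t *\<^sub>R (y - p) \<in> S" by simp
    with mn have "norm p \<le> norm (p + t *\<^sub>R (y - p))" by blast
    hence n: "(norm p)^2 \<le> (norm (p + t *\<^sub>R (y - p)))^2" by (rule power_mono) simp
    have e: "(norm (p + t *\<^sub>R (y - p)))^2 = (norm p)^2 + 2 * t * inner p (y - p) + t * t * (norm (y - p))^2"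
      by (simp add: power2_norm_eq_inner inner_add_left inner_add_right inner_commute algebra_simps)
    have "0 \<le> 2 * t * inner p (y - p) + t * t * (norm (y - p))^2" using n e by linarith
    also have "\<dots> = t * (2 * inner p (y - p) + t * (norm (y - p))^2)" by (simp add: algebra_simps)
    finally have "0 \<le> t * (2 * inner p (y - p) + t * (norm (y - p))^2)" .
    then show ?thesis using t by (simp add: zero_le_mult_iff)
  qed
  have "0 \<le> 2 * inner p (y - p)" by (rule lim_nonneg_aux[OF H])
  then show ?thesis by simp
qed

lemma proj0_exists:
  fixes S :: "'a::{real_inner,complete_space} set"
  assumes cl: "closed S" and cv: "convex S" and ne: "S \<noteq> {}"
  shows "\<exists>p\<in>S. \<forall>y\<in>S. norm p \<le> norm y"
proof -
  from ne obtain s where s: "s \<in> S" by blast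
  define P where "P = (\<lambda>z (c::real). z \<in> S \<and> c = 0)"
  have P_iff: "P z c \<longleftrightarrow> z \<in> S \<and> c = 0" for z c by (simp add: P_def)
  have "\<exists>z c. P z c \<and> (\<forall>w d. P w d \<longrightarrow> c + (norm z)^2/2 \<le> d + (norm w)^2/2)"
  proof (rule sc_min[where L=0])
    show "P s 0" unfolding P_iff using s by simp
    show "0 \<le> c + (norm z)^2/2" if "P z c" for z c using that unfolding P_iff by simp
    show "P ((1/2) *\<^sub>R (z + w)) ((c + d)/2)" if "P z c" "P w d" for z c w d
    proof -
      from that have zw: "z \<in> S" "w \<in> S" "c = 0" "d = 0" unfolding P_iff by auto
      have "(1/2) *\<^sub>R z + (1/2) *\<^sub>R w \<in> S"
        by (rule convexD[OF cv zw(1) zw(2)]) simp_all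
      then have "(1/2) *\<^sub>R (z + w) \<in> S" by (simp only: scaleR_add_right)
      then show ?thesis unfolding P_iff using zw(3,4) by simp
    qed
    show "P z c" if "\<forall>k. P (Z k) (C k)" "Z \<longlonglongrightarrow> z" "C \<longlonglongrightarrow> c" for Z C z c
    proof -
      have ZS: "\<And>k. Z k \<in> S" and C0: "\<And>k. C k = 0" using that(1) unfolding P_iff by auto
      have "z \<in> S" by (rule closed_sequentially[OF cl ZS that(2)])
      moreover have "C = (\<lambda>_. 0)" using C0 by (rule ext)
      hence "C \<longlonglongrightarrow> 0" by (simp only: tendsto_const)
      hence "c = 0" by (rule LIMSEQ_unique[OF that(3)])
      ultimately show ?thesis unfolding P_iff by simp
    qed
  qed
  then obtain z c where Pz: "P z c" and h: "\<forall>w d. P w d \<longrightarrow> c + (norm z)^2/2 \<le> d + (norm w)^2/2" by blast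
  from Pz have zS: "z \<in> S" and c0: "c = 0" unfolding P_iff by auto
  have "norm z \<le> norm y" if "y \<in> S" for y
  proof -
    have "P y 0" using that unfolding P_iff by simp
    with h have "c + (norm z)^2/2 \<le> 0 + (norm y)^2/2" by blast
    with c0 have "(norm z)^2 \<le> (norm y)^2" by simp
    then show ?thesis by (rule power2_le_imp_le) simp
  qed
  with zS show ?thesis by blast
qed

lemma proj0_char:
  fixes S :: "'a::real_inner set"
  assumes cv: "convex S" and p: "p \<in> S" and mn: "\<forall>y\<in>S. norm p \<le> norm y"
  shows "proj S 0 = p"
  unfolding proj_def
proof (rule the_equality)
  show "p \<in> S \<and> (\<forall>y\<in>S. norm (0 - p) \<le> norm (0 - y))" using p mn by simp
  fix q assume q: "q \<in> S \<and> (\<forall>y\<in>S. norm (0 - q) \<le> norm (0 - y))"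
  hence q1: "q \<in> S" and q2: "\<forall>y\<in>S. norm q \<le> norm y" by auto
  have "0 \<le> inner p (q - p)" by (rule proj0_var[OF cv p mn q1])
  moreover have "0 \<le> inner q (p - q)" by (rule proj0_var[OF cv q1 q2 p])
  ultimately have "inner (q - p) (q - p) \<le> 0"
    by (simp add: inner_diff_left inner_diff_right inner_commute)
  then have "inner (q - p) (q - p) = 0" by (meson antisym inner_ge_zero)
  then show "q = p" by simp
qed

lemma proj0_in:
  fixes S :: "'a::{real_inner,complete_space} set"
  assumes cl: "closed S" and cv: "convex S" and ne: "S \<noteq> {}"
  shows "proj S 0 \<in> S \<and> (\<forall>y\<in>S. norm (proj S 0) \<le> norm y)"
proof -
  from proj0_exists[OF assms] obtain p where "p \<in> S" "\<forall>y\<in>S. norm p \<le> norm y" by blast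
  with proj0_char[OF cv this] show ?thesis by simp
qed

lemma closure_diff_mem:
  fixes SA SB :: "'a::real_normed_vector set"
  assumes "a \<in> closure SA" "b \<in> closure SB"
  shows "a - b \<in> closure {x - y | x y. x \<in> SA \<and> y \<in> SB}"
proof -
  from assms obtain X Y where X: "\<forall>n. X n \<in> SA" "X \<longlonglongrightarrow> a" and Y: "\<forall>n. Y n \<in> SB" "Y \<longlonglongrightarrow> b"
    unfolding closure_sequential by blast
  have A: "X n - Y n \<in> closure {x - y | x y. x \<in> SA \<and> y \<in> SB}" for n
  proof -
    have "X n - Y n \<in> {x - y | x y. x \<in> SA \<and> y \<in> SB}" using X(1) Y(1) by blast
    then show ?thesis using closure_subset by (rule subsetD[rotated])
  qed
  have B: "(\<lambda>n. X n - Y n) \<longlonglongrightarrow> a - b" by (intro tendsto_intros X(2) Y(2))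
  show ?thesis by (rule closed_sequentially[OF closed_closure A B])
qed

lemma closure_add_mem:
  fixes SA SB :: "'a::real_normed_vector set"
  assumes "a \<in> closure SA" "b \<in> closure SB"
  shows "a + b \<in> closure {x + y | x y. x \<in> SA \<and> y \<in> SB}"
proof -
  from assms obtain X Y where X: "\<forall>n. X n \<in> SA" "X \<longlonglongrightarrow> a" and Y: "\<forall>n. Y n \<in> SB" "Y \<longlonglongrightarrow> b"
    unfolding closure_sequential by blast
  have A: "X n + Y n \<in> closure {x + y | x y. x \<in> SA \<and> y \<in> SB}" for n
  proof -
    have "X n + Y n \<in> {x + y | x y. x \<in> SA \<and> y \<in> SB}" using X(1) Y(1) by blast
    then show ?thesis using closure_subset by (rule subsetD[rotated])
  qed
  have B: "(\<lambda>n. X n + Y n) \<longlonglongrightarrow> a + b" by (intro tendsto_intros X(2) Y(2))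
  show ?thesis by (rule closed_sequentially[OF closed_closure A B])
qed

lemma convex_closure_diff:
  fixes SA SB :: "'a::real_normed_vector set"
  assumes "convex (closure SA)" "convex (closure SB)"
  shows "convex (closure {x - y | x y. x \<in> SA \<and> y \<in> SB})"
proof (rule convex_closure_pairs)
  fix p q and t :: real assume pq: "p \<in> {x - y | x y. x \<in> SA \<and> y \<in> SB}" "q \<in> {x - y | x y. x \<in> SA \<and> y \<in> SB}"
    and t: "0 \<le> t" "t \<le> 1"
  from pq obtain a1 b1 a2 b2 where e: "p = a1 - b1" "q = a2 - b2" "a1 \<in> SA" "a2 \<in> SA" "b1 \<in> SB" "b2 \<in> SB"
    by blast
  have "(1 - t) *\<^sub>R a1 + t *\<^sub>R a2 \<in> closure SA"
    using e closure_subset t by (intro convexD[OF assms(1)]) auto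
  moreover have "(1 - t) *\<^sub>R b1 + t *\<^sub>R b2 \<in> closure SB"
    using e closure_subset t by (intro convexD[OF assms(2)]) auto
  ultimately have "((1 - t) *\<^sub>R a1 + t *\<^sub>R a2) - ((1 - t) *\<^sub>R b1 + t *\<^sub>R b2) \<in> closure {x - y | x y. x \<in> SA \<and> y \<in> SB}"
    by (rule closure_diff_mem)
  moreover have "((1 - t) *\<^sub>R a1 + t *\<^sub>R a2) - ((1 - t) *\<^sub>R b1 + t *\<^sub>R b2) = (1 - t) *\<^sub>R p + t *\<^sub>R q"
    by (simp add: e algebra_simps)
  ultimately show "(1 - t) *\<^sub>R p + t *\<^sub>R q \<in> closure {x - y | x y. x \<in> SA \<and> y \<in> SB}" by simp
qed

lemma convex_closure_add:
  fixes SA SB :: "'a::real_normed_vector set"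
  assumes "convex (closure SA)" "convex (closure SB)"
  shows "convex (closure {x + y | x y. x \<in> SA \<and> y \<in> SB})"
proof (rule convex_closure_pairs)
  fix p q and t :: real assume pq: "p \<in> {x + y | x y. x \<in> SA \<and> y \<in> SB}" "q \<in> {x + y | x y. x \<in> SA \<and> y \<in> SB}"
    and t: "0 \<le> t" "t \<le> 1"
  from pq obtain a1 b1 a2 b2 where e: "p = a1 + b1" "q = a2 + b2" "a1 \<in> SA" "a2 \<in> SA" "b1 \<in> SB" "b2 \<in> SB"
    by blast
  have "(1 - t) *\<^sub>R a1 + t *\<^sub>R a2 \<in> closure SA"
    using e closure_subset t by (intro convexD[OF assms(1)]) auto
  moreover have "(1 - t) *\<^sub>R b1 + t *\<^sub>R b2 \<in> closure SB"
    using e closure_subset t by (intro convexD[OF assms(2)]) auto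
  ultimately have "((1 - t) *\<^sub>R a1 + t *\<^sub>R a2) + ((1 - t) *\<^sub>R b1 + t *\<^sub>R b2) \<in> closure {x + y | x y. x \<in> SA \<and> y \<in> SB}"
    by (rule closure_add_mem)
  moreover have "((1 - t) *\<^sub>R a1 + t *\<^sub>R a2) + ((1 - t) *\<^sub>R b1 + t *\<^sub>R b2) = (1 - t) *\<^sub>R p + t *\<^sub>R q"
    by (simp add: e algebra_simps)
  ultimately show "(1 - t) *\<^sub>R p + t *\<^sub>R q \<in> closure {x + y | x y. x \<in> SA \<and> y \<in> SB}" by simp
qed

lemma res_fne:
  fixes A :: "'a::{real_inner,complete_space} \<Rightarrow> 'a set"
  assumes mm: "maximally_monotone A"
  shows "(norm (resolvent A x - resolvent A y))^2 \<le> inner (resolvent A x - resolvent A y) (x - y)"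
proof -
  have "0 \<le> inner (resolvent A x - resolvent A y) ((x - resolvent A x) - (y - resolvent A y))"
    by (rule mm_mono[OF mm res_prop[OF mm] res_prop[OF mm]])
  also have "(x - resolvent A x) - (y - resolvent A y) = (x - y) - (resolvent A x - resolvent A y)"
    by simp
  finally show ?thesis by (simp add: inner_diff_right power2_norm_eq_inner)
qed

lemma sq_le_imp:
  fixes a b :: real
  assumes "a^2 \<le> a * b" "0 \<le> a" "0 \<le> b"
  shows "a \<le> b"
proof (cases "a = 0")
  case True then show ?thesis using assms by simp
next
  case False
  with assms have "0 < a" by simp
  from assms(1) have "a * a \<le> a * b" by (simp add: power2_eq_square)
  with \<open>0 < a\<close> show ?thesis by simp
qed

lemma res_ne:
  fixes A :: "'a::{real_inner,complete_space} \<Rightarrow> 'a set"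
  assumes mm: "maximally_monotone A"
  shows "norm (resolvent A x - resolvent A y) \<le> norm (x - y)"
proof (rule sq_le_imp)
  have "inner (resolvent A x - resolvent A y) (x - y) \<le> norm (resolvent A x - resolvent A y) * norm (x - y)"
    by (rule norm_cauchy_schwarz)
  with res_fne[OF mm, of x y]
  show "(norm (resolvent A x - resolvent A y))^2 \<le> norm (resolvent A x - resolvent A y) * norm (x - y)"
    by linarith
qed simp_all

lemma refl_ne:
  fixes A :: "'a::{real_inner,complete_space} \<Rightarrow> 'a set"
  assumes mm: "maximally_monotone A"
  shows "norm (reflected_resolvent A x - reflected_resolvent A y) \<le> norm (x - y)"
proof -
  define d where "d = resolvent A x - resolvent A y"
  define e where "e = x - y"
  have eq: "reflected_resolvent A x - reflected_resolvent A y = 2 *\<^sub>R d - e"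
    by (simp add: reflected_resolvent_def d_def e_def algebra_simps)
  have "(norm (2 *\<^sub>R d - e))^2 = 4 * (norm d)^2 - 4 * inner d e + (norm e)^2"
    by (simp add: power2_norm_eq_inner inner_diff_left inner_diff_right inner_commute algebra_simps)
  moreover have "(norm d)^2 \<le> inner d e" using res_fne[OF mm, of x y] by (simp add: d_def e_def)
  ultimately have "(norm (2 *\<^sub>R d - e))^2 \<le> (norm e)^2" by linarith
  hence "norm (2 *\<^sub>R d - e) \<le> norm e" by (rule power2_le_imp_le) simp
  then show ?thesis by (simp add: eq e_def)
qed

lemma half_half: "(1/2) *\<^sub>R x + (1/2) *\<^sub>R x = (x::'a::real_vector)"
  by (metis field_sum_of_halves scaleR_add_left scaleR_one)

lemma half_half2: "(1/2) *\<^sub>R x + ((1/2) *\<^sub>R x + y) = x + (y::'a::real_vector)"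
  by (simp add: add.assoc[symmetric] half_half)

lemma DR_half:
  "DR_op A B x = (1/2) *\<^sub>R (x + reflected_resolvent B (reflected_resolvent A x))"
  by (simp add: DR_op_def reflected_resolvent_def algebra_simps half_half half_half2)

lemma DR_fne:
  fixes A B :: "'a::{real_inner,complete_space} \<Rightarrow> 'a set"
  assumes mA: "maximally_monotone A" and mB: "maximally_monotone B"
  shows "(norm (DR_op A B x - DR_op A B y))^2 + (norm ((x - DR_op A B x) - (y - DR_op A B y)))^2
           \<le> (norm (x - y))^2"
proof -
  define N where "N z = reflected_resolvent B (reflected_resolvent A z)" for z
  define e where "e = x - y"
  define n where "n = N x - N y"
  have nn: "norm n \<le> norm e"
  proof -
    have "norm n \<le> norm (reflected_resolvent A x - reflected_resolvent A y)"
      unfolding n_def N_def by (rule refl_ne[OF mB])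
    also have "\<dots> \<le> norm e" unfolding e_def by (rule refl_ne[OF mA])
    finally show ?thesis .
  qed
  have e1: "DR_op A B x - DR_op A B y = (1/2) *\<^sub>R (e + n)"
    by (simp add: DR_half N_def[symmetric] e_def n_def algebra_simps half_half half_half2)
  have e2: "(x - DR_op A B x) - (y - DR_op A B y) = (1/2) *\<^sub>R (e - n)"
    by (simp add: DR_half N_def[symmetric] e_def n_def algebra_simps half_half half_half2)
  have A: "(norm ((1/2) *\<^sub>R (e + n)))^2 + (norm ((1/2) *\<^sub>R (e - n)))^2 = ((norm e)^2 + (norm n)^2) / 2"
    by (simp add: power2_norm_eq_inner inner_add_left inner_add_right inner_diff_left inner_diff_right
        inner_commute algebra_simps)
  have B: "(norm n)^2 \<le> (norm e)^2" using nn by (rule power_mono) simp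
  show ?thesis unfolding e1 e2 e_def[symmetric] using A B by argo
qed

lemma DR_ne:
  fixes A B :: "'a::{real_inner,complete_space} \<Rightarrow> 'a set"
  assumes mA: "maximally_monotone A" and mB: "maximally_monotone B"
  shows "norm (DR_op A B x - DR_op A B y) \<le> norm (x - y)"
proof -
  have "(norm (DR_op A B x - DR_op A B y))^2 \<le> (norm (x - y))^2"
    using DR_fne[OF mA mB, of x y] zero_le_power2[of "norm ((x - DR_op A B x) - (y - DR_op A B y))"] by linarith
  then show ?thesis by (rule power2_le_imp_le) simp
qed

lemma DR_iter_ne:
  fixes A B :: "'a::{real_inner,complete_space} \<Rightarrow> 'a set"
  assumes mA: "maximally_monotone A" and mB: "maximally_monotone B"
  shows "norm ((DR_op A B ^^ n) x - (DR_op A B ^^ n) y) \<le> norm (x - y)"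
proof (induction n)
  case 0 then show ?case by simp
next
  case (Suc n)
  have "norm ((DR_op A B ^^ Suc n) x - (DR_op A B ^^ Suc n) y)
      = norm (DR_op A B ((DR_op A B ^^ n) x) - DR_op A B ((DR_op A B ^^ n) y))" by simp
  also have "\<dots> \<le> norm ((DR_op A B ^^ n) x - (DR_op A B ^^ n) y)" by (rule DR_ne[OF mA mB])
  finally show ?case using Suc by linarith
qed

theorem corollary5p7:
  fixes A B :: "'a::{real_inner, complete_space} \<Rightarrow> 'a set"
    and f x :: 'a
  defines "T \<equiv> DR_op A B"
  defines "v \<equiv> proj (closure {y - T y | y. True}) 0"
  defines "D \<equiv> {a - b | a b. a \<in> dom_op A \<and> b \<in> dom_op B}"
  defines "R \<equiv> {a + b | a b. a \<in> ran_op A \<and> b \<in> ran_op B}"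
  defines "vD \<equiv> proj (closure D) 0"
  defines "vR \<equiv> proj (closure R) 0"
  assumes "maximally_monotone A" and "maximally_monotone B"
    and "closure {y - T y | y. True} = closure (D \<inter> R)"
    and "closure (D \<inter> R) = closure D \<inter> closure R"
    and "vR = 0"
    and "f = v + T f"
  shows "(\<forall>n::nat. resolvent A ((T ^^ n) f) = resolvent A (f - real n *\<^sub>R vD)
                 \<and> resolvent A (f - real n *\<^sub>R vD) = resolvent A f)
      \<and> bounded (range (\<lambda>n::nat. resolvent A ((T ^^ n) x)))
      \<and> bounded (range (\<lambda>n::nat. resolvent B (reflected_resolvent A ((T ^^ n) x))))"
proof -
  note mA = assms(7) and mB = assms(8) and hS = assms(9) and hDR = assms(10) and hvR = assms(11)
    and hf = assms(12)
  define S where "S = closure {y - T y | y. True}"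
  have S_eq: "S = closure D \<inter> closure R" using hS hDR by (simp add: S_def)
  have cvD: "convex (closure D)" unfolding D_def
    by (rule convex_closure_diff[OF dom_closure_convex[OF mA] dom_closure_convex[OF mB]])
  have cvR: "convex (closure R)" unfolding R_def
    by (rule convex_closure_add[OF ran_closure_convex[OF mA] ran_closure_convex[OF mB]])
  have inS: "y - T y \<in> S" for y unfolding S_def by (rule subsetD[OF closure_subset]) blast
  have Sne: "S \<noteq> {}" using inS by blast
  have v_S: "v = proj S 0" by (simp add: v_def S_def)
  have vprops: "v \<in> S \<and> (\<forall>y\<in>S. norm v \<le> norm y)"
    unfolding v_S S_eq
    by (rule proj0_in[OF closed_Int[OF closed_closure closed_closure] convex_Int[OF cvD cvR]]) (use Sne S_eq in simp)
  hence vS: "v \<in> S" and vmin: "\<And>y. y \<in> S \<Longrightarrow> norm v \<le> norm y" by auto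
  have vD_in: "v \<in> closure D" using vS S_eq by auto
  have Rne: "closure R \<noteq> {}" using Sne S_eq by auto
  have "vR \<in> closure R" unfolding vR_def using proj0_in[OF closed_closure cvR Rne] by blast
  hence zeroR: "0 \<in> closure R" using hvR by simp
  have Dne: "closure D \<noteq> {}" using Sne S_eq by auto
  have vDprops: "vD \<in> closure D \<and> (\<forall>y\<in>closure D. norm vD \<le> norm y)"
    unfolding vD_def by (rule proj0_in[OF closed_closure cvD Dne])
  hence vDD: "vD \<in> closure D" and vDmin: "\<forall>y\<in>closure D. norm vD \<le> norm y" by auto
  have vDvar: "0 \<le> inner vD (d - vD)" if "d \<in> closure D" for d
    by (rule proj0_var[OF cvD vDD vDmin that])
  define a0 where "a0 = resolvent A 0"
  have a0dom: "a0 \<in> dom_op A" using res_prop[OF mA, of 0] by (auto simp: dom_op_def a0_def)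
  have sig: "inner vD c \<le> inner vD a0 - inner vD vD" if "c \<in> dom_op B" for c
  proof -
    have "a0 - c \<in> D" using a0dom that by (auto simp: D_def)
    hence "a0 - c \<in> closure D" using closure_subset by blast
    from vDvar[OF this] show ?thesis by (simp add: inner_diff_right)
  qed
  have shiftB: "b' + vD \<in> closure (ran_op B)" if "b' \<in> ran_op B" for b'
  proof -
    from that obtain b where "b' \<in> B b" by (auto simp: ran_op_def)
    from barrier[OF mB this sig] show ?thesis .
  qed
  have shiftR: "r + vD \<in> closure R" if "r \<in> R" for r
  proof -
    from that obtain a' b' where r: "r = a' + b'" "a' \<in> ran_op A" "b' \<in> ran_op B"
      by (auto simp: R_def)
    have "a' \<in> closure (ran_op A)" using r(2) closure_subset by blast
    moreover have "b' + vD \<in> closure (ran_op B)" by (rule shiftB[OF r(3)])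
    ultimately have "a' + (b' + vD) \<in> closure {x + y | x y. x \<in> ran_op A \<and> y \<in> ran_op B}"
      by (rule closure_add_mem)
    then show ?thesis by (simp add: R_def r add.assoc)
  qed
  have vD_R: "vD \<in> closure R"
  proof -
    from zeroR obtain Q where Q: "\<forall>n. Q n \<in> R" "Q \<longlonglongrightarrow> 0"
      unfolding closure_sequential by blast
    have A1: "\<And>n. Q n + vD \<in> closure R" using Q(1) shiftR by blast
    have A2: "(\<lambda>n. Q n + vD) \<longlonglongrightarrow> 0 + vD" by (intro tendsto_intros Q(2))
    have "0 + vD \<in> closure R" by (rule closed_sequentially[OF closed_closure A1 A2])
    then show ?thesis by simp
  qed
  have "vD \<in> S" using vDD vD_R S_eq by simp
  hence nv1: "norm v \<le> norm vD" by (rule vmin)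
  have nv2: "norm vD \<le> norm v" using vDmin vD_in by blast
  have vD_eq: "vD = v"
  proof -
    have "proj (closure D) 0 = v"
    proof (rule proj0_char[OF cvD vD_in])
      show "\<forall>y\<in>closure D. norm v \<le> norm y" using vDmin nv1 nv2 by auto
    qed
    then show ?thesis by (simp add: vD_def)
  qed
  have step: "T z - T (T z) = v" if hz: "z - T z = v" for z
  proof -
    define w where "w = T z - T (T z)"
    have "(norm (T z - T (T z)))^2 + (norm ((z - T z) - (T z - T (T z))))^2 \<le> (norm (z - T z))^2"
      unfolding T_def by (rule DR_fne[OF mA mB])
    hence h1: "(norm w)^2 + (norm (v - w))^2 \<le> (norm v)^2" by (simp add: w_def hz)
    have "norm v \<le> norm w" unfolding w_def by (rule vmin[OF inS])
    hence h2: "(norm v)^2 \<le> (norm w)^2" by (rule power_mono) simp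
    have "(norm (v - w))^2 \<le> 0" using h1 h2 by linarith
    hence "v - w = 0" by simp
    then show ?thesis by (simp add: w_def)
  qed
  have iter: "(T ^^ n) f = f - real n *\<^sub>R v \<and> (T ^^ n) f - T ((T ^^ n) f) = v" for n
  proof (induction n)
    case 0
    have "f - T f = v" using hf by (simp add: algebra_simps)
    then show ?case by simp
  next
    case (Suc n)
    have "(T ^^ Suc n) f = T ((T ^^ n) f)" by simp
    also have "\<dots> = (T ^^ n) f - v" using Suc.IH by (simp add: algebra_simps)
    also have "\<dots> = f - real (Suc n) *\<^sub>R v" using Suc.IH by (simp add: algebra_simps)
    finally have e: "(T ^^ Suc n) f = f - real (Suc n) *\<^sub>R v" .
    have "T ((T ^^ n) f) - T (T ((T ^^ n) f)) = v" by (rule step) (use Suc.IH in blast)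
    then show ?case using e by simp
  qed
  have Jinv: "resolvent A (f - real n *\<^sub>R v) = resolvent A f" for n
  proof -
    define fn where "fn = f - real n *\<^sub>R v"
    define an where "an = resolvent A fn"
    define a0' where "a0' = resolvent A f"
    define bn where "bn = resolvent B (reflected_resolvent A fn)"
    define b0 where "b0 = resolvent B (reflected_resolvent A f)"
    have e1: "(T ^^ n) f = fn" using conjunct1[OF iter[of n]] by (simp add: fn_def)
    have Tfn: "fn - T fn = v" using conjunct2[OF iter[of n]] unfolding e1 .
    have Tf: "f - T f = v" using iter[of 0] by simp
    have bn_eq: "bn = an - v" using Tfn by (simp add: T_def DR_op_def an_def bn_def algebra_simps)
    have b0_eq: "b0 = a0' - v" using Tf by (simp add: T_def DR_op_def a0'_def b0_def algebra_simps)
    have gA1: "fn - an \<in> A an" unfolding an_def by (rule res_prop[OF mA])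
    have gA0: "f - a0' \<in> A a0'" unfolding a0'_def by (rule res_prop[OF mA])
    have gB1: "reflected_resolvent A fn - bn \<in> B bn" unfolding bn_def by (rule res_prop[OF mB])
    have gB0: "reflected_resolvent A f - b0 \<in> B b0" unfolding b0_def by (rule res_prop[OF mB])
    define \<Delta> where "\<Delta> = an - a0'"
    have mAi: "0 \<le> inner \<Delta> ((fn - an) - (f - a0'))" unfolding \<Delta>_def by (rule mm_mono[OF mA gA1 gA0])
    have mBi: "0 \<le> inner (bn - b0) ((reflected_resolvent A fn - bn) - (reflected_resolvent A f - b0))"
      by (rule mm_mono[OF mB gB1 gB0])
    have X1: "bn - b0 = \<Delta>" by (simp add: bn_eq b0_eq \<Delta>_def)
    have X2: "(reflected_resolvent A fn - bn) - (reflected_resolvent A f - b0) = - ((fn - an) - (f - a0'))"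
      by (simp add: reflected_resolvent_def bn_eq b0_eq an_def a0'_def algebra_simps scaleR_2)
    from mBi have "0 \<le> inner \<Delta> (- ((fn - an) - (f - a0')))" unfolding X1 X2 .
    hence mBi': "0 \<le> - inner \<Delta> ((fn - an) - (f - a0'))" by (simp only: inner_minus_right)
    have zero: "inner \<Delta> ((fn - an) - (f - a0')) = 0" using mAi mBi' by linarith
    have "(fn - an) - (f - a0') = - (real n *\<^sub>R v) - \<Delta>" by (simp add: fn_def \<Delta>_def algebra_simps)
    with zero have z2: "- (real n * inner \<Delta> v) - inner \<Delta> \<Delta> = 0"
      by (simp add: inner_diff_right)
    have "an \<in> dom_op A" using gA1 by (auto simp: dom_op_def)
    moreover have "b0 \<in> dom_op B" using gB0 by (auto simp: dom_op_def)
    ultimately have "an - b0 \<in> D" by (auto simp: D_def)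
    hence "an - b0 \<in> closure D" using closure_subset by blast
    from vDvar[OF this] have "0 \<le> inner v (an - b0 - v)" by (simp add: vD_eq)
    also have "an - b0 - v = \<Delta>" by (simp add: b0_eq \<Delta>_def)
    finally have "0 \<le> inner \<Delta> v" by (simp add: inner_commute)
    hence "0 \<le> real n * inner \<Delta> v" by simp
    with z2 have "inner \<Delta> \<Delta> \<le> 0" by linarith
    hence "inner \<Delta> \<Delta> = 0" by (meson antisym inner_ge_zero)
    hence "\<Delta> = 0" by simp
    then show ?thesis by (simp add: \<Delta>_def an_def a0'_def fn_def)
  qed
  have part1: "\<forall>n::nat. resolvent A ((T ^^ n) f) = resolvent A (f - real n *\<^sub>R vD)
                 \<and> resolvent A (f - real n *\<^sub>R vD) = resolvent A f"
    using iter Jinv by (simp add: vD_eq)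
  have part2: "bounded (range (\<lambda>n::nat. resolvent A ((T ^^ n) x)))"
    unfolding bounded_def
  proof (intro exI ballI)
    fix z assume "z \<in> range (\<lambda>n::nat. resolvent A ((T ^^ n) x))"
    then obtain n where z: "z = resolvent A ((T ^^ n) x)" by blast
    have "dist (resolvent A f) z = norm (resolvent A ((T ^^ n) f) - resolvent A ((T ^^ n) x))"
      using iter[of n] Jinv[of n] by (simp add: z dist_norm)
    also have "\<dots> \<le> norm ((T ^^ n) f - (T ^^ n) x)" by (rule res_ne[OF mA])
    also have "\<dots> \<le> norm (f - x)" unfolding T_def by (rule DR_iter_ne[OF mA mB])
    finally show "dist (resolvent A f) z \<le> norm (f - x)" .
  qed
  have JBform: "resolvent B (reflected_resolvent A y) = T y - y + resolvent A y" for y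
    by (simp add: T_def DR_op_def)
  have part3: "bounded (range (\<lambda>n::nat. resolvent B (reflected_resolvent A ((T ^^ n) x))))"
    unfolding bounded_def
  proof (intro exI ballI)
    fix z assume "z \<in> range (\<lambda>n::nat. resolvent B (reflected_resolvent A ((T ^^ n) x)))"
    then obtain n where z: "z = resolvent B (reflected_resolvent A ((T ^^ n) x))" by blast
    have c: "resolvent B (reflected_resolvent A ((T ^^ n) f)) = resolvent A f - v"
    proof -
      have "resolvent B (reflected_resolvent A ((T ^^ n) f)) = T ((T ^^ n) f) - (T ^^ n) f + resolvent A ((T ^^ n) f)"
        by (rule JBform)
      also have "T ((T ^^ n) f) - (T ^^ n) f = - v" using iter[of n] by (simp add: algebra_simps)
      also have "resolvent A ((T ^^ n) f) = resolvent A f" using iter[of n] Jinv[of n] by simp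
      finally show ?thesis by simp
    qed
    have "dist (resolvent A f - v) z = norm (resolvent B (reflected_resolvent A ((T ^^ n) f)) - resolvent B (reflected_resolvent A ((T ^^ n) x)))"
      by (simp add: z c dist_norm)
    also have "\<dots> \<le> norm (reflected_resolvent A ((T ^^ n) f) - reflected_resolvent A ((T ^^ n) x))"
      by (rule res_ne[OF mB])
    also have "\<dots> \<le> norm ((T ^^ n) f - (T ^^ n) x)" by (rule refl_ne[OF mA])
    also have "\<dots> \<le> norm (f - x)" unfolding T_def by (rule DR_iter_ne[OF mA mB])
    finally show "dist (resolvent A f - v) z \<le> norm (f - x)" .
  qed
  from part1 part2 part3 show ?thesis by blast
qed

end
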